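(* Fix $b\in\mathbb{N}$ and let $S$ be a subset of $\mathbb{N}$. Then \[ \lim_{N\to\infty}\frac{|\{(r,s)\in\mathbb{N}\times\mathbb{N} : 0<r,s\le N,\ \gcd_b(r,s)\in S\}|}{N^2}=\frac{\zeta_S(b+1)}{\zeta(b+1)}, \] where $\zeta_S(b+1)=\sum_{k\in S}k^{-(b+1)}$ and $\zeta$ is the Riemann zeta function.
   Context: For $b\in\mathbb{N}$ and $r,s\in\mathbb{N}$, $\gcd_b(r,s)=\max\{k\in\mathbb{N} : k\mid r \text{ and } k^b\mid s\}$. *)

theory Defs
  imports "HOL-Analysis.Analysis"
begin

definition gcd_b :: "nat \<Rightarrow> nat \<Rightarrow> nat \<Rightarrow> nat" where
  "gcd_b b r s = Max {k. k dvd r \<and> k ^ b dvd s}"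

definition zeta_nat :: "nat \<Rightarrow> real" where
  "zeta_nat m = (\<Sum>n. 1 / real (Suc n) ^ m)"

definition zeta_S :: "nat set \<Rightarrow> nat \<Rightarrow> real" where
  "zeta_S S m = infsum (\<lambda>k. 1 / real k ^ m) S"

end

theory Submission
  imports Defs "HOL-Computational_Algebra.Primes"
begin

definition sqf :: "nat \<Rightarrow> bool" where
  "sqf n \<longleftrightarrow> n > 0 \<and> (\<forall>p\<in>prime_factors n. multiplicity p n = 1)"

definition mu :: "nat \<Rightarrow> real" where
  "mu n = (if sqf n then (-1) ^ card (prime_factors n) else 0)"

lemma abs_mu: "\<bar>mu n\<bar> \<le> 1"
  by (simp add: mu_def)

lemma mu_0 [simp]: "mu 0 = 0" by (simp add: mu_def sqf_def)

lemma prod_set_primes: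
  assumes "finite T" "\<And>p. p \<in> T \<Longrightarrow> prime (p::nat)"
  shows "prime_factors (\<Prod>T) = T" "sqf (\<Prod>T)"
proof -
  have nz: "0 \<notin> id ` T" using assms(2) by (metis id_apply imageE not_prime_0)
  have "prime_factors (\<Prod>T) = \<Union>((prime_factors \<circ> id) ` T)"
    using prime_factors_prod[OF assms(1) nz] by simp
  also have "\<dots> = T" using assms(2) by (auto simp: prime_prime_factors)
  finally show pf: "prime_factors (\<Prod>T) = T" .
  have m: "multiplicity p (\<Prod>T) = 1" if "p \<in> T" for p
    using multiplicity_prod_prime_powers[OF assms(1), of p "\<lambda>_. 1"] assms that by simp
  show "sqf (\<Prod>T)" unfolding sqf_def pf using m assms
    by (auto simp: prime_gt_0_nat intro!: prod_pos)
qed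

lemma mu_sum:
  assumes "n > 0"
  shows "(\<Sum>d | d dvd n. mu d) = (if n = 1 then 1 else 0)"
proof -
  define P where "P = prime_factors n"
  have finP: "finite P" unfolding P_def by simp
  have Pprime: "prime p" if "p \<in> P" for p using that unfolding P_def by auto
  have img: "{d. d dvd n \<and> sqf d} = Prod ` Pow P"
  proof (intro equalityI subsetI)
    fix d assume "d \<in> {d. d dvd n \<and> sqf d}"
    then have d: "d dvd n" "sqf d" by auto
    then have d0: "d \<noteq> 0" by (auto simp: sqf_def)
    have "d = (\<Prod>p\<in>prime_factors d. p ^ multiplicity p d)"
      using prod_prime_factors[OF d0] by simp
    also have "\<dots> = \<Prod>(prime_factors d)"
      using d(2) unfolding sqf_def by (intro prod.cong) auto
    finally have "d = \<Prod>(prime_factors d)" .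
    moreover have "prime_factors d \<subseteq> P" unfolding P_def using d assms by (intro dvd_prime_factors) auto
    ultimately show "d \<in> Prod ` Pow P" by blast
  next
    fix d assume "d \<in> Prod ` Pow P"
    then obtain T where T: "T \<subseteq> P" "d = \<Prod>T" by auto
    have finT: "finite T" using T finP finite_subset by auto
    have "sqf d" using prod_set_primes(2)[OF finT] T Pprime by auto
    moreover have "d dvd n"
    proof -
      have "\<Prod>T dvd (\<Prod>p\<in>T. p ^ multiplicity p n)"
      proof (intro prod_dvd_prod)
        fix p assume "p \<in> T"
        then have "multiplicity p n > 0" using T assms by (auto simp: P_def prime_factors_multiplicity)
        then show "p dvd p ^ multiplicity p n" by (simp add: dvd_power)
      qed
      also have "\<dots> dvd (\<Prod>p\<in>P. p ^ multiplicity p n)"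
        using T finP by (intro prod_dvd_prod_subset) auto
      also have "\<dots> = n" using prod_prime_factors[of n] assms unfolding P_def by simp
      finally show ?thesis using T by simp
    qed
    ultimately show "d \<in> {d. d dvd n \<and> sqf d}" by simp
  qed
  have inj: "inj_on Prod (Pow P)"
  proof
    fix T U assume "T \<in> Pow P" "U \<in> Pow P" "\<Prod>T = \<Prod>U"
    then show "T = U" using prod_set_primes(1)[of T] prod_set_primes(1)[of U] Pprime finP
      by (metis PowD finite_subset subsetD)
  qed
  have "(\<Sum>d | d dvd n. mu d) = (\<Sum>d \<in> {d. d dvd n \<and> sqf d}. mu d)"
    using assms by (intro sum.mono_neutral_right) (auto simp: mu_def)
  also have "\<dots> = (\<Sum>T\<in>Pow P. mu (\<Prod>T))" unfolding img using inj by (simp add: sum.reindex)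
  also have "\<dots> = (\<Sum>T\<in>Pow P. (-1) ^ card T)"
  proof (intro sum.cong refl)
    fix T assume "T \<in> Pow P"
    then have "finite T" "\<And>p. p \<in> T \<Longrightarrow> prime p" using finP Pprime finite_subset by auto
    then show "mu (\<Prod>T) = (-1) ^ card T" using prod_set_primes[of T] by (simp add: mu_def)
  qed
  also have "\<dots> = (0::real) ^ card P"
    using prod_diff_conv_sum[of P "\<lambda>_. (1::real)" "\<lambda>_. 1"] finP by simp
  also have "\<dots> = (if n = 1 then 1 else 0)"
  proof (cases "n = 1")
    case True then show ?thesis by (simp add: P_def)
  next
    case False
    then obtain p where "prime p" "p dvd n" using prime_factor_nat by blast
    then have "p \<in> P" using assms unfolding P_def by (simp add: in_prime_factors_iff)
    then have "P \<noteq> {}" by auto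
    then show ?thesis using finP False by (simp add: card_gt_0_iff)
  qed
  finally show ?thesis .
qed

lemma lcm_pow_nat: "lcm (a::nat) c ^ n = lcm (a ^ n) (c ^ n)"
proof (cases "a = 0 \<or> c = 0")
  case True then show ?thesis by (cases n) auto
next
  case False
  have 1: "lcm a c ^ n * gcd a c ^ n = (a*c)^n"
    by (metis power_mult_distrib prod_gcd_lcm_nat mult.commute)
  have 2: "lcm (a^n) (c^n) * gcd (a^n) (c^n) = (a*c)^n"
    by (metis power_mult_distrib prod_gcd_lcm_nat mult.commute)
  have 3: "gcd (a^n) (c^n) = gcd a c ^ n" by (rule gcd_exp)
  have 4: "gcd a c ^ n \<noteq> 0" using False by simp
  from 1 2 3 have "lcm a c ^ n * gcd a c ^ n = lcm (a^n) (c^n) * gcd a c ^ n" by simp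
  then show ?thesis using 4 mult_right_cancel by blast
qed
lemma gcdb_props:
  assumes "r > 0"
  shows "gcd_b b r s dvd r" "gcd_b b r s ^ b dvd s" "d dvd gcd_b b r s \<longleftrightarrow> d dvd r \<and> d ^ b dvd s"
proof -
  define K where "K = {k. k dvd r \<and> k ^ b dvd s}"
  have "K \<subseteq> {..r}" unfolding K_def using assms by (auto intro: dvd_imp_le)
  then have fin: "finite K" using finite_subset by blast
  have "1 \<in> K" unfolding K_def by simp
  then have ne: "K \<noteq> {}" by auto
  define m where "m = Max K"
  have mK: "m \<in> K" unfolding m_def using fin ne by simp
  then have mr: "m dvd r" and ms: "m ^ b dvd s" unfolding K_def by auto
  have eq: "gcd_b b r s = m" unfolding gcd_b_def m_def K_def by simp
  show "gcd_b b r s dvd r" "gcd_b b r s ^ b dvd s" using mr ms eq by auto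
  have m0: "m > 0" using mr assms by (cases "m = 0") auto
  have key: "d dvd m" if dr: "d dvd r" and ds: "d ^ b dvd s" for d
  proof -
    have d0: "d > 0" using dr assms by (cases "d = 0") auto
    have "lcm d m dvd r" using dr mr by (simp add: lcm_least)
    moreover have "lcm d m ^ b dvd s" using ds ms unfolding lcm_pow_nat by (simp add: lcm_least)
    ultimately have "lcm d m \<in> K" unfolding K_def by simp
    then have le: "lcm d m \<le> m" unfolding m_def using fin by simp
    have "m dvd lcm d m" by simp
    moreover have "lcm d m > 0" using d0 m0 by (simp add: lcm_pos_nat)
    ultimately have "m \<le> lcm d m" by (simp add: dvd_imp_le)
    with le have "lcm d m = m" by simp
    then show ?thesis by (metis dvd_lcm1)
  qed
  show "d dvd gcd_b b r s \<longleftrightarrow> d dvd r \<and> d ^ b dvd s"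
  proof
    assume h: "d dvd gcd_b b r s"
    then have "d dvd m" using eq by simp
    then have "d dvd r" "d ^ b dvd m ^ b" using mr by (auto intro: dvd_trans dvd_power_same)
    then show "d dvd r \<and> d ^ b dvd s" using ms dvd_trans by blast
  next
    assume "d dvd r \<and> d ^ b dvd s"
    then show "d dvd gcd_b b r s" using key eq by auto
  qed
qed

lemma gcdb_pos: "r > 0 \<Longrightarrow> gcd_b b r s > 0"
  using gcdb_props(1)[of r b s] by (cases "gcd_b b r s = 0") auto

lemma gcdb_le: "r > 0 \<Longrightarrow> gcd_b b r s \<le> r"
  using gcdb_props(1)[of r b s] by (simp add: dvd_imp_le)

lemma card_mult:
  assumes "(m::nat) > 0"
  shows "card {r. 0 < r \<and> r \<le> N \<and> m dvd r} = N div m"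
proof -
  have "{r. 0 < r \<and> r \<le> N \<and> m dvd r} = (\<lambda>i. m * i) ` {1..N div m}"
  proof (intro equalityI subsetI)
    fix r assume "r \<in> {r. 0 < r \<and> r \<le> N \<and> m dvd r}"
    then have h: "m dvd r" "0 < r" "r \<le> N" by auto
    then obtain i where "r = m * i" by (auto elim: dvdE)
    then have "i \<in> {1..N div m}" using assms h
      by (auto simp: less_eq_div_iff_mult_less_eq mult.commute)
    then show "r \<in> (\<lambda>i. m * i) ` {1..N div m}" using \<open>r = m*i\<close> by blast
  next
    fix r assume "r \<in> (\<lambda>i. m * i) ` {1..N div m}"
    then obtain i where "i \<in> {1..N div m}" "r = m * i" by (rule imageE)
    then have "r = m * i" "1 \<le> i" "i \<le> N div m" by auto
    then show "r \<in> {r. 0 < r \<and> r \<le> N \<and> m dvd r}" using assms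
      by (auto simp: less_eq_div_iff_mult_less_eq mult.commute)
  qed
  moreover have "inj_on (\<lambda>i. m * i) {1..N div m}" using assms by (auto simp: inj_on_def)
  ultimately show ?thesis by (simp add: card_image)
qed

definition box :: "nat \<Rightarrow> (nat \<times> nat) set" where
  "box N = {1..N} \<times> {1..N}"

lemma finite_box [simp]: "finite (box N)" by (simp add: box_def)

lemma card_box_dvd:
  assumes "(m::nat) > 0"
  shows "card {x \<in> box N. m dvd fst x \<and> m ^ b dvd snd x} = (N div m) * (N div m ^ b)"
proof -
  have "{x \<in> box N. m dvd fst x \<and> m ^ b dvd snd x} =
        {r. 0 < r \<and> r \<le> N \<and> m dvd r} \<times> {s. 0 < s \<and> s \<le> N \<and> m ^ b dvd s}"
    by (auto simp: box_def)
  then show ?thesis using card_mult[OF assms, of N] card_mult[of "m ^ b" N] assms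
    by (simp add: card_cartesian_product)
qed

definition cnt :: "nat \<Rightarrow> nat \<Rightarrow> nat \<Rightarrow> nat" where
  "cnt b N k = card {x \<in> box N. gcd_b b (fst x) (snd x) = k}"

lemma real_card_filter:
  "finite A \<Longrightarrow> real (card {x \<in> A. P x}) = (\<Sum>x\<in>A. if P x then 1 else 0)"
proof -
  assume "finite A"
  have "(\<Sum>x\<in>{x\<in>A. P x}. (1::real)) = (\<Sum>x\<in>A. if P x then 1 else 0)"
    using \<open>finite A\<close> by (rule sum.inter_filter)
  then show ?thesis by simp
qed

lemma pointwise:
  assumes "0 < r" "r \<le> N" "k > 0"
  shows "(if gcd_b b r s = k then 1 else 0) = (\<Sum>j\<in>{1..N}. if j * k dvd gcd_b b r s then mu j else 0)"
proof -
  define g where "g = gcd_b b r s"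
  have g0: "g > 0" using gcdb_pos[OF assms(1)] g_def by auto
  have "g \<le> r" using gcdb_le[OF assms(1)] g_def by auto
  then have g1: "g \<le> N" using assms by linarith
  have "(\<Sum>j\<in>{1..N}. if j * k dvd g then mu j else 0) = (\<Sum>j\<in>{j \<in> {1..N}. j * k dvd g}. mu j)"
    by (rule sum.inter_filter[symmetric]) simp
  also have "\<dots> = (if g = k then 1 else 0)"
  proof (cases "k dvd g")
    case True
    then obtain q where q: "g = k * q" by auto
    then have q0: "q > 0" using g0 by auto
    have "{j \<in> {1..N}. j * k dvd g} = {j. j dvd q}"
    proof (intro equalityI subsetI)
      fix j assume "j \<in> {j \<in> {1..N}. j * k dvd g}"
      then show "j \<in> {j. j dvd q}" using q assms by (auto simp: mult.commute)
    next
      fix j assume "j \<in> {j. j dvd q}"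
      then have "j dvd q" by simp
      moreover have "j \<le> q" using \<open>j dvd q\<close> q0 by (simp add: dvd_imp_le)
      moreover have "q \<le> k * q" using assms(3) by simp
      then have "q \<le> N" using q g1 by linarith
      moreover have "j > 0" using \<open>j dvd q\<close> q0 by (cases "j = 0") auto
      ultimately show "j \<in> {j \<in> {1..N}. j * k dvd g}" using q g0 g1
        by (auto simp: mult.commute)
    qed
    then show ?thesis using mu_sum[OF q0] q assms by simp
  next
    case False
    then have E: "{j \<in> {1..N}. j * k dvd g} = {}" by (auto dest: dvd_mult_right)
    have "g \<noteq> k" using False by auto
    then show ?thesis by (simp only: E sum.empty) simp
  qed
  finally show ?thesis unfolding g_def by simp
qed

lemma cnt_formula:
  assumes "k > 0"
  shows "real (cnt b N k) = (\<Sum>j\<in>{1..N}. mu j * real (N div (j*k)) * real (N div (j*k)^b))"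
proof -
  have "real (cnt b N k) = (\<Sum>x\<in>box N. if gcd_b b (fst x) (snd x) = k then 1 else 0)"
    unfolding cnt_def by (rule real_card_filter) simp
  also have "\<dots> = (\<Sum>x\<in>box N. \<Sum>j\<in>{1..N}. if j * k dvd gcd_b b (fst x) (snd x) then mu j else 0)"
  proof (intro sum.cong refl)
    fix x assume "x \<in> box N"
    then have "0 < fst x" "fst x \<le> N" by (auto simp: box_def)
    from pointwise[OF this assms, of b "snd x"]
    show "(if gcd_b b (fst x) (snd x) = k then 1 else 0) =
      (\<Sum>j\<in>{1..N}. if j * k dvd gcd_b b (fst x) (snd x) then mu j else 0)" .
  qed
  also have "\<dots> = (\<Sum>j\<in>{1..N}. \<Sum>x\<in>box N. if j * k dvd gcd_b b (fst x) (snd x) then mu j else 0)"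
    by (rule sum.swap)
  also have "\<dots> = (\<Sum>j\<in>{1..N}. mu j * real (card {x \<in> box N. j * k dvd fst x \<and> (j*k) ^ b dvd snd x}))"
  proof (intro sum.cong refl)
    fix j assume "j \<in> {1..N}"
    have "(\<Sum>x\<in>box N. if j * k dvd gcd_b b (fst x) (snd x) then mu j else 0)
        = (\<Sum>x\<in>box N. mu j * (if j * k dvd fst x \<and> (j*k) ^ b dvd snd x then 1 else 0))"
      by (intro sum.cong refl) (auto simp: box_def gcdb_props(3))
    also have "\<dots> = mu j * real (card {x \<in> box N. j * k dvd fst x \<and> (j*k) ^ b dvd snd x})"
      by (simp add: sum_distrib_left[symmetric] real_card_filter)
    finally show "(\<Sum>x\<in>box N. if j * k dvd gcd_b b (fst x) (snd x) then mu j else 0) = \<dots>" .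
  qed
  also have "\<dots> = (\<Sum>j\<in>{1..N}. mu j * real (N div (j*k)) * real (N div (j*k)^b))"
    using assms by (intro sum.cong refl) (simp add: card_box_dvd)
  finally show ?thesis .
qed

lemma cnt_le: "k > 0 \<Longrightarrow> cnt b N k \<le> (N div k) * (N div k ^ b)"
proof -
  assume k: "k > 0"
  have "cnt b N k \<le> card {x \<in> box N. k dvd fst x \<and> k ^ b dvd snd x}"
    unfolding cnt_def by (intro card_mono) (auto simp: box_def gcdb_props(1,2))
  then show ?thesis using card_box_dvd[OF k] by simp
qed

lemma cnt_0: "cnt b N 0 = 0"
proof -
  have "{x \<in> box N. gcd_b b (fst x) (snd x) = 0} = {}"
  proof safe
    fix r s assume "(r, s) \<in> box N" "gcd_b b (fst (r, s)) (snd (r, s)) = 0"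
    then show "(r, s) \<in> {}" using gcdb_pos[of r b s] by (auto simp: box_def)
  qed
  then show ?thesis unfolding cnt_def by simp
qed

lemma card_S:
  "real (card {x \<in> box N. gcd_b b (fst x) (snd x) \<in> S}) = (\<Sum>k\<le>N. if k \<in> S then real (cnt b N k) else 0)"
proof -
  have "real (card {x \<in> box N. gcd_b b (fst x) (snd x) \<in> S}) =
        (\<Sum>x\<in>box N. if gcd_b b (fst x) (snd x) \<in> S then 1 else 0)"
    by (rule real_card_filter) simp
  also have "\<dots> = (\<Sum>k\<le>N. \<Sum>x\<in>{x \<in> box N. gcd_b b (fst x) (snd x) = k}. if gcd_b b (fst x) (snd x) \<in> S then 1 else 0)"
    by (rule sum.group[symmetric]) (auto simp: box_def intro: order.trans[OF gcdb_le])
  also have "\<dots> = (\<Sum>k\<le>N. if k \<in> S then real (cnt b N k) else 0)"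
    unfolding cnt_def by (intro sum.cong refl) auto
  finally show ?thesis .
qed


lemma summable_M: "b \<ge> 1 \<Longrightarrow> summable (\<lambda>k. 1 / real k ^ (b+1))"
  using inverse_power_summable[of "b+1", where 'a=real] by (simp add: inverse_eq_divide)

lemma div_bounds:
  assumes "(m::nat) > 0"
  shows "real (N div m) \<le> real N / real m" "real N / real m - 1 \<le> real (N div m)"
proof -
  have e: "real (N div m) = of_int \<lfloor>real N / real m\<rfloor>"
    using floor_divide_of_nat_eq[of N m, where 'a=real] by simp
  show "real (N div m) \<le> real N / real m" unfolding e by (rule of_int_floor_le)
  show "real N / real m - 1 \<le> real (N div m)" unfolding e by linarith
qed

lemma div_lim:
  assumes "(m::nat) > 0"
  shows "(\<lambda>N. real (N div m) / real N) \<longlonglongrightarrow> 1 / real m"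
proof (rule tendsto_sandwich[where f = "\<lambda>N. 1 / real m - 1 / real N" and h = "\<lambda>N. 1 / real m"])
  show "eventually (\<lambda>N. 1 / real m - 1 / real N \<le> real (N div m) / real N) sequentially"
  proof (rule eventually_sequentiallyI[of 1])
    fix N :: nat assume "N \<ge> 1"
    then have "real N > 0" by simp
    have "(real N / real m - 1) / real N \<le> real (N div m) / real N"
      using div_bounds(2)[OF assms, of N] \<open>real N > 0\<close> by (intro divide_right_mono) auto
    then show "1 / real m - 1 / real N \<le> real (N div m) / real N"
      using \<open>real N > 0\<close> by (simp add: diff_divide_distrib)
  qed
  show "eventually (\<lambda>N. real (N div m) / real N \<le> 1 / real m) sequentially"
  proof (rule eventually_sequentiallyI[of 1])
    fix N :: nat assume "N \<ge> 1"
    then have "real N > 0" by simp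
    have "real (N div m) / real N \<le> (real N / real m) / real N"
      using div_bounds(1)[OF assms, of N] \<open>real N > 0\<close> by (intro divide_right_mono) auto
    then show "real (N div m) / real N \<le> 1 / real m"
      using \<open>real N > 0\<close> by simp
  qed
  show "(\<lambda>N. 1 / real m - 1 / real N) \<longlonglongrightarrow> 1 / real m"
    using tendsto_diff[OF tendsto_const lim_1_over_n] by simp
qed auto

lemma prod_lim:
  assumes "(m::nat) > 0"
  shows "(\<lambda>N. real (N div m) * real (N div m ^ b) / real N ^ 2) \<longlonglongrightarrow> 1 / real m ^ (b+1)"
proof -
  have m: "m ^ b > 0" using assms by simp
  have "(\<lambda>N. (real (N div m) / real N) * (real (N div m ^ b) / real N)) \<longlonglongrightarrow> (1 / real m) * (1 / real (m ^ b))"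
    by (intro tendsto_mult div_lim assms m)
  then show ?thesis by (simp add: power2_eq_square power_add mult.commute)
qed

lemma prod_bound:
  assumes "(m::nat) > 0"
  shows "real (N div m) * real (N div m ^ b) / real N ^ 2 \<le> 1 / real m ^ (b+1)"
proof (cases "N = 0")
  case True then show ?thesis by simp
next
  case False
  have m: "m ^ b > 0" using assms by simp
  have "real (N div m) * real (N div m ^ b) \<le> (real N / real m) * (real N / real (m ^ b))"
    using div_bounds(1)[OF assms, of N] div_bounds(1)[OF m, of N]
    by (intro mult_mono) auto
  also have "\<dots> = real N ^ 2 / real m ^ (b+1)" by (simp add: power2_eq_square power_add)
  finally show ?thesis using False by (simp add: divide_le_eq field_simps)
qed


lemma tannery_seq:
  fixes a :: "nat \<Rightarrow> nat \<Rightarrow> real"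
  assumes "\<And>k. (\<lambda>n. a k n) \<longlonglongrightarrow> B k"
  assumes "\<And>k n. norm (a k n) \<le> M k"
  assumes "summable M"
  shows "summable B \<and> (\<lambda>n. suminf (\<lambda>k. a k n)) \<longlonglongrightarrow> suminf B"
proof -
  have "eventually (\<lambda>(k,n). norm (a k n) \<le> M k) (at_top \<times>\<^sub>F sequentially)"
    using assms(2) by (intro always_eventually) (simp add: case_prod_beta)
  from tannerys_theorem[of a B sequentially, OF assms(1) this assms(3)]
  show ?thesis using summable_rabs_cancel by auto
qed

lemma cnt_lim:
  assumes b: "b \<ge> 1" and k: "k > 0"
  shows "(\<lambda>N. real (cnt b N k) / real N ^ 2) \<longlonglongrightarrow> (\<Sum>j. mu j / real j ^ (b+1)) / real k ^ (b+1)"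
proof -
  define a where "a j N = mu j * (real (N div (j*k)) * real (N div (j*k)^b) / real N ^ 2)" for j N
  define B where "B j = mu j / real j ^ (b+1) / real k ^ (b+1)" for j
  have lim: "(\<lambda>N. a j N) \<longlonglongrightarrow> B j" for j
  proof (cases "j = 0")
    case True then show ?thesis by (simp add: a_def B_def)
  next
    case False
    then have jk: "j * k > 0" using k by simp
    have "(\<lambda>N. a j N) \<longlonglongrightarrow> mu j * (1 / real (j*k) ^ (b+1))"
      unfolding a_def by (intro tendsto_mult tendsto_const prod_lim jk)
    moreover have "real (j*k) ^ (b+1) = real j ^ (b+1) * real k ^ (b+1)"
      by (simp only: of_nat_mult power_mult_distrib)
    ultimately show ?thesis by (simp only: B_def divide_divide_eq_left times_divide_eq_right mult_1_right)
  qed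
  have bound: "norm (a j N) \<le> 1 / real j ^ (b+1)" for j N
  proof (cases "j = 0")
    case True then show ?thesis by (simp add: a_def)
  next
    case False
    then have jk: "j * k > 0" using k by simp
    define P where "P = real (N div (j*k)) * real (N div (j*k)^b) / real N ^ 2"
    have P0: "P \<ge> 0" unfolding P_def by simp
    have P1: "P \<le> 1 / real (j*k) ^ (b+1)" unfolding P_def by (rule prod_bound[OF jk])
    have "1 / real (j*k) ^ (b+1) \<le> 1 / real j ^ (b+1)"
      using False k by (intro divide_left_mono power_mono mult_pos_pos) auto
    moreover have "norm (a j N) = \<bar>mu j\<bar> * P" unfolding a_def P_def by (simp add: abs_mult)
    moreover have "\<bar>mu j\<bar> * P \<le> 1 * P" using abs_mu P0 by (intro mult_right_mono) auto
    ultimately show ?thesis using P1 by linarith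
  qed
  have sum: "suminf (\<lambda>j. a j N) = real (cnt b N k) / real N ^ 2" for N
  proof -
    have "suminf (\<lambda>j. a j N) = (\<Sum>j\<in>{1..N}. a j N)"
    proof (rule suminf_finite)
      fix j assume "j \<notin> {1..N}"
      then have "j = 0 \<or> j > N" by auto
      then show "a j N = 0"
      proof
        assume "j > N"
        moreover have "j \<le> j * k" using k by simp
        ultimately have "N < j * k" by linarith
        then show ?thesis by (simp add: a_def)
      qed (simp add: a_def)
    qed simp
    also have "\<dots> = real (cnt b N k) / real N ^ 2"
      unfolding cnt_formula[OF k] a_def by (simp add: sum_divide_distrib mult.assoc)
    finally show ?thesis .
  qed
  have "summable (\<lambda>j. 1 / real j ^ (b+1))" using summable_M[OF b] .
  from tannery_seq[of a B, OF lim bound this]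
  have *: "(\<lambda>N. real (cnt b N k) / real N ^ 2) \<longlonglongrightarrow> suminf B" using sum by simp
  have "summable (\<lambda>j. mu j / real j ^ (b+1))"
  proof (rule summable_comparison_test'[OF summable_M[OF b]])
    fix j :: nat
    show "norm (mu j / real j ^ (b+1)) \<le> 1 / real j ^ (b+1)"
      using abs_mu[of j] by (simp add: divide_right_mono)
  qed
  then have "suminf B = (\<Sum>j. mu j / real j ^ (b+1)) / real k ^ (b+1)"
    unfolding B_def by (rule suminf_divide)
  with * show ?thesis by simp
qed


lemma S_lim:
  assumes b: "b \<ge> 1"
  shows "(\<lambda>N. real (card {x \<in> box N. gcd_b b (fst x) (snd x) \<in> S}) / real N ^ 2)
    \<longlonglongrightarrow> (\<Sum>j. mu j / real j ^ (b+1)) * (\<Sum>k. if k \<in> S then 1 / real k ^ (b+1) else 0)"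
proof -
  define L where "L = (\<Sum>j. mu j / real j ^ (b+1))"
  define a where "a k N = (if k \<in> S then real (cnt b N k) / real N ^ 2 else 0)" for k N
  define B where "B k = (if k \<in> S then L / real k ^ (b+1) else 0)" for k
  have lim: "(\<lambda>N. a k N) \<longlonglongrightarrow> B k" for k
  proof (cases "k = 0")
    case True then show ?thesis by (simp add: a_def B_def cnt_0)
  next
    case False
    then show ?thesis using cnt_lim[OF b, of k] unfolding a_def B_def L_def by simp
  qed
  have bound: "norm (a k N) \<le> 1 / real k ^ (b+1)" for k N
  proof (cases "k = 0")
    case True then show ?thesis by (simp add: a_def cnt_0)
  next
    case False
    then have k: "k > 0" by simp
    have "real (cnt b N k) \<le> real (N div k) * real (N div k ^ b)"
      using cnt_le[OF k, of b N] by (simp only: of_nat_mult[symmetric] of_nat_le_iff)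
    then have "real (cnt b N k) / real N ^ 2 \<le> real (N div k) * real (N div k ^ b) / real N ^ 2"
      by (intro divide_right_mono) auto
    also have "\<dots> \<le> 1 / real k ^ (b+1)" by (rule prod_bound[OF k])
    finally show ?thesis by (simp add: a_def)
  qed
  have sum: "suminf (\<lambda>k. a k N) = real (card {x \<in> box N. gcd_b b (fst x) (snd x) \<in> S}) / real N ^ 2" for N
  proof -
    have "suminf (\<lambda>k. a k N) = (\<Sum>k\<le>N. a k N)"
    proof (rule suminf_finite)
      fix k assume "k \<notin> {..N}"
      then have k: "k > 0" "N < k" by auto
      have "N div k = 0" using k by simp
      then have "cnt b N k = 0" using cnt_le[OF k(1), of b N] by simp
      then show "a k N = 0" by (simp add: a_def)
    qed simp
    also have "\<dots> = real (card {x \<in> box N. gcd_b b (fst x) (snd x) \<in> S}) / real N ^ 2"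
      unfolding card_S a_def sum_divide_distrib by (intro sum.cong refl) simp
    finally show ?thesis .
  qed
  from tannery_seq[of a B, OF lim bound summable_M[OF b]]
  have *: "(\<lambda>N. real (card {x \<in> box N. gcd_b b (fst x) (snd x) \<in> S}) / real N ^ 2) \<longlonglongrightarrow> suminf B"
    using sum by simp
  have "summable (\<lambda>k. if k \<in> S then 1 / real k ^ (b+1) else 0)"
  proof (rule summable_comparison_test'[OF summable_M[OF b]])
    fix k :: nat
    show "norm (if k \<in> S then 1 / real k ^ (b+1) else 0) \<le> 1 / real k ^ (b+1)" by simp
  qed
  from suminf_mult[OF this, of L]
  have "(\<Sum>k. L * (if k \<in> S then 1 / real k ^ (b+1) else 0)) = L * (\<Sum>k. if k \<in> S then 1 / real k ^ (b+1) else 0)" .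
  moreover have "(\<lambda>k. L * (if k \<in> S then 1 / real k ^ (b+1) else 0)) = B"
    unfolding B_def by (intro ext) simp
  ultimately have "suminf B = L * (\<Sum>k. if k \<in> S then 1 / real k ^ (b+1) else 0)" by simp
  with * show ?thesis unfolding L_def by simp
qed

lemma zeta_S_eq:
  assumes b: "b \<ge> 1"
  shows "zeta_S S (b+1) = (\<Sum>k. if k \<in> S then 1 / real k ^ (b+1) else 0)"
proof -
  have sm: "summable (\<lambda>k. if k \<in> S then 1 / real k ^ (b+1) else 0)"
  proof (rule summable_comparison_test'[OF summable_M[OF b]])
    fix k :: nat
    show "norm (if k \<in> S then 1 / real k ^ (b+1) else 0) \<le> 1 / real k ^ (b+1)" by simp
  qed
  have "zeta_S S (b+1) = infsum (\<lambda>k. if k \<in> S then 1 / real k ^ (b+1) else 0) UNIV"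
    unfolding zeta_S_def by (rule infsum_cong_neutral) auto
  also have "\<dots> = (\<Sum>k. if k \<in> S then 1 / real k ^ (b+1) else 0)"
    by (rule infsumI, rule sums_nonneg_imp_has_sum[OF summable_sums[OF sm]]) simp
  finally show ?thesis .
qed

lemma zeta_nat_eq:
  assumes b: "b \<ge> 1"
  shows "zeta_nat (b+1) = (\<Sum>k. 1 / real k ^ (b+1))"
  unfolding zeta_nat_def using suminf_split_head[OF summable_M[OF b]] by simp


theorem mainTheorem5:
  fixes b :: nat and S :: "nat set"
  assumes "b \<ge> 1"
  shows "(\<lambda>N::nat. real (card {(r, s). 0 < r \<and> r \<le> N \<and> 0 < s \<and> s \<le> N \<and> gcd_b b r s \<in> S})
            / real N ^ 2)
         \<longlonglongrightarrow> zeta_S S (b + 1) / zeta_nat (b + 1)"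
proof -
  define L where "L = (\<Sum>j. mu j / real j ^ (b+1))"
  define Z where "Z = (\<Sum>k. 1 / real k ^ (b+1))"
  have card_box: "card {x \<in> box N. gcd_b b (fst x) (snd x) \<in> UNIV} = N * N" for N
    by (simp add: box_def card_cartesian_product)
  have lim1: "(\<lambda>N. real (card {x \<in> box N. gcd_b b (fst x) (snd x) \<in> UNIV}) / real N ^ 2) \<longlonglongrightarrow> L * Z"
    using S_lim[OF assms, of UNIV] unfolding L_def Z_def by simp
  have lim2: "(\<lambda>N. real (card {x \<in> box N. gcd_b b (fst x) (snd x) \<in> UNIV}) / real N ^ 2) \<longlonglongrightarrow> 1"
  proof (rule Lim_transform_eventually[OF tendsto_const])
    show "\<forall>\<^sub>F N in sequentially. 1 = real (card {x \<in> box N. gcd_b b (fst x) (snd x) \<in> UNIV}) / real N ^ 2"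
    proof (rule eventually_sequentiallyI[of 1])
      fix N :: nat assume "N \<ge> 1"
      then show "1 = real (card {x \<in> box N. gcd_b b (fst x) (snd x) \<in> UNIV}) / real N ^ 2"
        unfolding card_box by (simp add: power2_eq_square)
    qed
  qed
  have LZ: "L * Z = 1" using LIMSEQ_unique[OF lim1 lim2] .
  have seteq: "{(r, s). 0 < r \<and> r \<le> N \<and> 0 < s \<and> s \<le> N \<and> gcd_b b r s \<in> S}
      = {x \<in> box N. gcd_b b (fst x) (snd x) \<in> S}" for N
    by (auto simp: box_def)
  have "(\<lambda>N::nat. real (card {(r, s). 0 < r \<and> r \<le> N \<and> 0 < s \<and> s \<le> N \<and> gcd_b b r s \<in> S})
            / real N ^ 2) \<longlonglongrightarrow> L * zeta_S S (b + 1)"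
    unfolding seteq zeta_S_eq[OF assms] L_def by (rule S_lim[OF assms])
  moreover have "L * zeta_S S (b + 1) = zeta_S S (b + 1) / zeta_nat (b + 1)"
  proof -
    have "Z \<noteq> 0" using LZ by auto
    then have "L = 1 / Z" using LZ by (simp add: field_simps)
    then show ?thesis unfolding zeta_nat_eq[OF assms] Z_def by simp
  qed
  ultimately show ?thesis by simp
qed

end
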